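(* For every drag $D$ there exists a drag expression all of whose drag components are atomic drags and whose evaluation yields $D$.
   Context: Fix a set $\mathcal{F}$ of function symbols, each with a fixed arity, and a set $\mathcal{X}$ of variables disjoint from $\mathcal{F}$. A drag is a tuple $D=\langle V,R,L,X,S\rangle$ where: $V$ is a finite set of vertices; $R:V\to\mathbb{N}$ is a finite multiset of vertices, the roots ($v$ is rooted if $R(v)>0$); $S\subseteq V$ is the set of sprouts and $I=V\setminus S$ the set of internal vertices; $L:V\to\mathcal{F}\cup\mathcal{X}$ labels internal vertices by function symbols and sprouts by variables; $X:V\to V^*$ assigns to each vertex a list of successors whose length is the arity of its label (sprouts have no successors). If $b$ is the $k$-th element of $X(a)$, then $(a,k,b)$ is an edge with tail $a$ and head $b$. $\mathrm{pred}(v,D)$ is the number of edges with head $v$. Two drags are disjoint if they share neither vertex nor variable; the sum $D\oplus D'$ of disjoint drags is their juxtaposition (union of vertices, roots, labels, edges and sprouts). An equimorphism is a bijection of vertices preserving labels, numbers of roots, and edges (with indices) in both directions. The subdrag of $D$ generated by a vertex $v$ consists of the vertices accessible from $v$ with their labels and edges, each such vertex $w$ getting as roots its roots in $D$ plus the number of edges into $w$ from vertices not accessible from $v$. A wire of a drag $D$ is a pair $s\rightsquigarrow r$ of vertices of $D$ with $s$ a sprout and $r\neq s$. For a set $W$ of wires, $s>_W r$ holds if $s\rightsquigarrow r\in W$, or $s\rightsquigarrow t\in W$ and $t>_W r$ for some $t$. $W$ is well-behaved if it is finite and (1) functional; (2) injective: for every vertex $r$, $\sum_{s>_W r}\mathrm{pred}(s,D)\le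 R(r)$; (3) the restriction of $>_W$ to pairs of sprouts is acyclic. The elementary wiring $D[s\rightsquigarrow r]$ removes the sprout $s$ (with its roots), replaces every edge $(v,i,s)$ by $(v,i,r)$, and sets the number of roots of $r$ to $R(r)-\mathrm{pred}(s,D)$. For well-behaved $W$, $D_\varnothing=D$ and $D_{\{s\rightsquigarrow r\}\cup W'}=(D[s\rightsquigarrow r])_{W'}$ with $s$ maximal for $>_W$ (choice-independent). The resolution of $t\in\mathrm{Dom}(W)$ is the $>_W$-minimal $r$ with $t>_W r$. $W$ is coherent if (1) when some sprout labeled $x$ is an origin of a wire, all sprouts labeled $x$ are; (2) for wires $s\rightsquigarrow r$, $s'\rightsquigarrow r'$ with same-labeled origins, the images of $r,r'$ under the map $D\to D_W$ (identity outside $\mathrm{Dom}(W)$, resolution on $\mathrm{Dom}(W)$) generate equimorphic subdrags of $D_W$. Given disjoint drags $D,D'$, a switchboard for $D,D'$ is a pair of partial functions $\xi_D$ from sprouts of $D$ to rooted vertices of $D'$ and $\xi_{D'}$ from sprouts of $D'$ to rooted vertices of $D$, such that $\xi=\xi_D\cup\xi_{D'}$ is a coherent well-behaved set of wires of $D\oplus D'$. Their product is $D\otimes_\xi D'=(D\oplus D')_\xi$. A drag expression is an expression built, by means of sums $\oplus$ and products $\otimes_\xi$ (with $\xi$ a switchboard for the values of the two arguments), from a set of drags $\{D_i\}_i$, its drag components, such that $D_i$ and $D_j$ share no vertex and no variable for $i\neq j$. An atomic drag is either (a) an atomic vertex: a drag with exactly one internal vertex, carrying any number of roots, whose successors are sprouts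 that are pairwise distinct and carry pairwise distinct labels; or (b) an atomic set of sprouts: a drag with no internal vertex consisting of a nonempty set of pairwise distinct sprouts all labeled by the same variable, each with any number of roots. *)

theory Defs
  imports Main
begin

datatype ('f, 'x) lab = Fn 'f | Vr 'x

text \<open>A drag V,R,L,X,S. R is a multiset of vertices given by its multiplicity function
(zero outside V). The values of L and X outside V are irrelevant.\<close>
record ('v, 'f, 'x) drag =
  dV :: "'v set"
  dR :: "'v \<Rightarrow> nat"
  dL :: "'v \<Rightarrow> ('f, 'x) lab"
  dX :: "'v \<Rightarrow> 'v list"
  dS :: "'v set"

definition is_drag :: "('f \<Rightarrow> nat) \<Rightarrow> ('v, 'f, 'x) drag \<Rightarrow> bool" where
  "is_drag ar D \<longleftrightarrow>
     finite (dV D) \<and> dS D \<subseteq> dV D \<and>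
     (\<forall>v. v \<notin> dV D \<longrightarrow> dR D v = 0) \<and>
     (\<forall>v\<in>dS D. (\<exists>x. dL D v = Vr x) \<and> dX D v = []) \<and>
     (\<forall>v\<in>dV D - dS D. \<exists>f. dL D v = Fn f \<and> length (dX D v) = ar f) \<and>
     (\<forall>v\<in>dV D. set (dX D v) \<subseteq> dV D)"

text \<open>Edges (a,k,b): b is the k-th successor of a (indices counted from 0).\<close>
definition edges :: "('v, 'f, 'x) drag \<Rightarrow> ('v \<times> nat \<times> 'v) set" where
  "edges D = {(a, k, b). a \<in> dV D \<and> k < length (dX D a) \<and> dX D a ! k = b}"

definition pred :: "'v \<Rightarrow> ('v, 'f, 'x) drag \<Rightarrow> nat" where
  "pred v D = card {e \<in> edges D. snd (snd e) = v}"

definition dvars :: "('v, 'f, 'x) drag \<Rightarrow> 'x set" where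
  "dvars D = {x. \<exists>v\<in>dV D. dL D v = Vr x}"

definition disjoint_drags :: "('v, 'f, 'x) drag \<Rightarrow> ('v, 'f, 'x) drag \<Rightarrow> bool" where
  "disjoint_drags D D' \<longleftrightarrow> dV D \<inter> dV D' = {} \<and> dvars D \<inter> dvars D' = {}"

definition dsum :: "('v, 'f, 'x) drag \<Rightarrow> ('v, 'f, 'x) drag \<Rightarrow> ('v, 'f, 'x) drag" where
  "dsum D D' = \<lparr> dV = dV D \<union> dV D',
                 dR = (\<lambda>v. dR D v + dR D' v),
                 dL = (\<lambda>v. if v \<in> dV D then dL D v else dL D' v),
                 dX = (\<lambda>v. if v \<in> dV D then dX D v else dX D' v),
                 dS = dS D \<union> dS D' \<rparr>"

text \<open>Equality of drags as mathematical objects (data outside V ignored).\<close>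
definition same_drag :: "('v, 'f, 'x) drag \<Rightarrow> ('v, 'f, 'x) drag \<Rightarrow> bool" where
  "same_drag D D' \<longleftrightarrow> dV D = dV D' \<and> dS D = dS D' \<and> (\<forall>v. dR D v = dR D' v) \<and>
     (\<forall>v\<in>dV D. dL D v = dL D' v \<and> dX D v = dX D' v)"

definition equimorphism :: "('v \<Rightarrow> 'v) \<Rightarrow> ('v, 'f, 'x) drag \<Rightarrow> ('v, 'f, 'x) drag \<Rightarrow> bool" where
  "equimorphism h D D' \<longleftrightarrow> bij_betw h (dV D) (dV D') \<and>
     (\<forall>v\<in>dV D. dL D' (h v) = dL D v \<and> dR D' (h v) = dR D v \<and>
                (h v \<in> dS D' \<longleftrightarrow> v \<in> dS D) \<and> dX D' (h v) = map h (dX D v))"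

definition equimorphic :: "('v, 'f, 'x) drag \<Rightarrow> ('v, 'f, 'x) drag \<Rightarrow> bool" where
  "equimorphic D D' \<longleftrightarrow> (\<exists>h. equimorphism h D D')"

definition succ_rel :: "('v, 'f, 'x) drag \<Rightarrow> ('v \<times> 'v) set" where
  "succ_rel D = {(a, b). a \<in> dV D \<and> b \<in> set (dX D a)}"

definition accessible :: "('v, 'f, 'x) drag \<Rightarrow> 'v \<Rightarrow> 'v set" where
  "accessible D v = {w. (v, w) \<in> (succ_rel D)\<^sup>*}"

definition subdrag :: "('v, 'f, 'x) drag \<Rightarrow> 'v \<Rightarrow> ('v, 'f, 'x) drag" where
  "subdrag D v = \<lparr> dV = accessible D v,
     dR = (\<lambda>w. if w \<in> accessible D v then
                  dR D w + card {e \<in> edges D. fst e \<notin> accessible D v \<and> snd (snd e) = w}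
                else 0),
     dL = dL D, dX = dX D, dS = dS D \<inter> accessible D v \<rparr>"

definition is_wires :: "('v, 'f, 'x) drag \<Rightarrow> ('v \<times> 'v) set \<Rightarrow> bool" where
  "is_wires D W \<longleftrightarrow> (\<forall>(s, r)\<in>W. s \<in> dS D \<and> r \<in> dV D \<and> r \<noteq> s)"

text \<open>s >_W r is (s,r) \<in> W^+.\<close>
definition well_behaved :: "('v, 'f, 'x) drag \<Rightarrow> ('v \<times> 'v) set \<Rightarrow> bool" where
  "well_behaved D W \<longleftrightarrow> is_wires D W \<and> finite W \<and>
     (\<forall>s r r'. (s, r) \<in> W \<longrightarrow> (s, r') \<in> W \<longrightarrow> r = r') \<and>
     (\<forall>r. (\<Sum>s\<in>{s. (s, r) \<in> W\<^sup>+}. pred s D) \<le> dR D r) \<and>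
     acyclic (W\<^sup>+ \<inter> (dS D \<times> dS D))"

definition elem_wire :: "('v, 'f, 'x) drag \<Rightarrow> 'v \<Rightarrow> 'v \<Rightarrow> ('v, 'f, 'x) drag" where
  "elem_wire D s r = \<lparr> dV = dV D - {s},
     dR = (\<lambda>v. if v = s then 0 else if v = r then dR D r - pred s D else dR D v),
     dL = dL D,
     dX = (\<lambda>v. map (\<lambda>w. if w = s then r else w) (dX D v)),
     dS = dS D - {s} \<rparr>"

text \<open>wiring D W D' : D' = D_W, computed recursively by wiring a >_W-maximal origin first
(the result is independent of the choices).\<close>
inductive wiring :: "('v, 'f, 'x) drag \<Rightarrow> ('v \<times> 'v) set \<Rightarrow> ('v, 'f, 'x) drag \<Rightarrow> bool" where
  wiring_empty: "wiring D {} D"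
| wiring_step: "\<lbrakk>(s, r) \<in> W; \<not> (\<exists>t. (t, s) \<in> W\<^sup>+);
                 wiring (elem_wire D s r) (W - {(s, r)}) D'\<rbrakk> \<Longrightarrow> wiring D W D'"

text \<open>Resolution: the >_W-minimal r with t >_W r.\<close>
definition resolution :: "('v \<times> 'v) set \<Rightarrow> 'v \<Rightarrow> 'v" where
  "resolution W t = (THE r. (t, r) \<in> W\<^sup>+ \<and> r \<notin> Domain W)"

definition wire_image :: "('v \<times> 'v) set \<Rightarrow> 'v \<Rightarrow> 'v" where
  "wire_image W v = (if v \<in> Domain W then resolution W v else v)"

definition coherent :: "('v, 'f, 'x) drag \<Rightarrow> ('v \<times> 'v) set \<Rightarrow> ('v, 'f, 'x) drag \<Rightarrow> bool" where
  "coherent D W DW \<longleftrightarrow>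
     (\<forall>x. (\<exists>s\<in>Domain W. dL D s = Vr x) \<longrightarrow> (\<forall>s\<in>dS D. dL D s = Vr x \<longrightarrow> s \<in> Domain W)) \<and>
     (\<forall>s r s' r'. (s, r) \<in> W \<longrightarrow> (s', r') \<in> W \<longrightarrow> dL D s = dL D s' \<longrightarrow>
        equimorphic (subdrag DW (wire_image W r)) (subdrag DW (wire_image W r')))"

definition switchboard ::
  "('v, 'f, 'x) drag \<Rightarrow> ('v, 'f, 'x) drag \<Rightarrow> ('v \<times> 'v) set \<Rightarrow> ('v \<times> 'v) set \<Rightarrow> bool" where
  "switchboard D D' xi xi' \<longleftrightarrow>
     (\<forall>(s, r)\<in>xi. s \<in> dS D \<and> r \<in> dV D' \<and> dR D' r > 0) \<and>
     (\<forall>s r r'. (s, r) \<in> xi \<longrightarrow> (s, r') \<in> xi \<longrightarrow> r = r') \<and>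
     (\<forall>(s, r)\<in>xi'. s \<in> dS D' \<and> r \<in> dV D \<and> dR D r > 0) \<and>
     (\<forall>s r r'. (s, r) \<in> xi' \<longrightarrow> (s, r') \<in> xi' \<longrightarrow> r = r') \<and>
     well_behaved (dsum D D') (xi \<union> xi') \<and>
     (\<exists>DW. wiring (dsum D D') (xi \<union> xi') DW \<and> coherent (dsum D D') (xi \<union> xi') DW)"

datatype ('v, 'f, 'x) dexp =
    Comp "('v, 'f, 'x) drag"
  | DSum "('v, 'f, 'x) dexp" "('v, 'f, 'x) dexp"
  | DProd "('v, 'f, 'x) dexp" "('v \<times> 'v) set" "('v \<times> 'v) set" "('v, 'f, 'x) dexp"

fun components :: "('v, 'f, 'x) dexp \<Rightarrow> ('v, 'f, 'x) drag list" where
  "components (Comp D) = [D]"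
| "components (DSum E1 E2) = components E1 @ components E2"
| "components (DProd E1 xi xi' E2) = components E1 @ components E2"

inductive eval :: "('f \<Rightarrow> nat) \<Rightarrow> ('v, 'f, 'x) dexp \<Rightarrow> ('v, 'f, 'x) drag \<Rightarrow> bool" for ar where
  eval_comp: "is_drag ar D \<Longrightarrow> eval ar (Comp D) D"
| eval_sum: "\<lbrakk>eval ar E1 D1; eval ar E2 D2; disjoint_drags D1 D2\<rbrakk>
               \<Longrightarrow> eval ar (DSum E1 E2) (dsum D1 D2)"
| eval_prod: "\<lbrakk>eval ar E1 D1; eval ar E2 D2; disjoint_drags D1 D2; switchboard D1 D2 xi xi';
               wiring (dsum D1 D2) (xi \<union> xi') D\<rbrakk>
               \<Longrightarrow> eval ar (DProd E1 xi xi' E2) D"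

definition drag_expression :: "('v, 'f, 'x) dexp \<Rightarrow> bool" where
  "drag_expression E \<longleftrightarrow> (let cs = components E in
     \<forall>i<length cs. \<forall>j<length cs. i \<noteq> j \<longrightarrow> disjoint_drags (cs ! i) (cs ! j))"

definition atomic_vertex :: "('f \<Rightarrow> nat) \<Rightarrow> ('v, 'f, 'x) drag \<Rightarrow> bool" where
  "atomic_vertex ar D \<longleftrightarrow> is_drag ar D \<and>
     (\<exists>v. dV D - dS D = {v} \<and> dS D = set (dX D v) \<and> distinct (dX D v) \<and>
          inj_on (dL D) (set (dX D v)))"

definition atomic_sprouts :: "('f \<Rightarrow> nat) \<Rightarrow> ('v, 'f, 'x) drag \<Rightarrow> bool" where
  "atomic_sprouts ar D \<longleftrightarrow> is_drag ar D \<and> dS D = dV D \<and> dV D \<noteq> {} \<and>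
     (\<exists>x. \<forall>s\<in>dS D. dL D s = Vr x)"

definition atomic_drag :: "('f \<Rightarrow> nat) \<Rightarrow> ('v, 'f, 'x) drag \<Rightarrow> bool" where
  "atomic_drag ar D \<longleftrightarrow> atomic_vertex ar D \<or> atomic_sprouts ar D"

end

theory Submission
  imports Defs
begin

lemma fresh_inj:
  assumes "finite (A::'a set)" "finite (B::'b set)" "infinite (UNIV::'b set)"
  shows "\<exists>g::'a\<Rightarrow>'b. inj_on g A \<and> g ` A \<inter> B = {}"
proof -
  have "infinite (UNIV - B)" using assms by (simp add: Diff_infinite_finite)
  then obtain T where T: "T \<subseteq> UNIV - B" "finite T" "card T = card A"
    using infinite_arbitrarily_large by blast
  then obtain g where "bij_betw g A T" using finite_same_card_bij assms(1) by metis
  then show ?thesis using T unfolding bij_betw_def by blast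
qed

definition EE :: "('v,'f,'x) drag \<Rightarrow> ('v \<times> nat) set" where
  "EE D = Sigma (dV D) (\<lambda>a. {..<length (dX D a)})"

fun sumE :: "('v set \<Rightarrow> ('v,'f,'x) drag) \<Rightarrow> 'v set list \<Rightarrow> ('v,'f,'x) dexp" where
  "sumE c [] = Comp (c {})"
| "sumE c [V] = Comp (c V)"
| "sumE c (V # W # Vs) = DSum (Comp (c V)) (sumE c (W # Vs))"

lemma components_sumE: "Vs \<noteq> [] \<Longrightarrow> components (sumE c Vs) = map c Vs"
  by (induction c Vs rule: sumE.induct) auto

lemma equimorphic_refl: "equimorphic X X"
  unfolding equimorphic_def equimorphism_def
  by (rule exI[of _ id]) (simp add: bij_betw_id)

locale expl =
  fixes ar :: "'f \<Rightarrow> nat" and D :: "('v,'f,'x) drag"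
    and sv qv :: "'v \<times> nat \<Rightarrow> 'v" and sx qx :: "'v \<times> nat \<Rightarrow> 'x"
  assumes dD: "is_drag ar D"
    and svi: "inj_on sv (EE D)" and qvi: "inj_on qv (EE D)"
    and sqv: "sv ` EE D \<inter> qv ` EE D = {}"
    and vfresh: "(sv ` EE D \<union> qv ` EE D) \<inter> dV D = {}"
    and sxi: "inj_on sx (EE D)" and qxi: "inj_on qx (EE D)"
    and sqx: "sx ` EE D \<inter> qx ` EE D = {}"
    and xfresh: "(sx ` EE D \<union> qx ` EE D) \<inter> dvars D = {}"
begin

abbreviation "Vb \<equiv> dV D"
abbreviation "E \<equiv> EE D"
abbreviation "Sp \<equiv> sv ` E"
abbreviation "Rl \<equiv> qv ` E"
abbreviation "Vall \<equiv> Vb \<union> Sp \<union> Rl"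

definition tgt :: "'v \<times> nat \<Rightarrow> 'v" where "tgt e = dX D (fst e) ! snd e"
definition cnt :: "'v \<Rightarrow> nat" where "cnt v = card {e \<in> E. tgt e = v}"
definition Lab :: "'v \<Rightarrow> ('f,'x) lab" where
  "Lab v = (if v \<in> Vb then dL D v else if v \<in> Sp then Vr (sx (the_inv_into E sv v))
            else Vr (qx (the_inv_into E qv v)))"
definition Succ :: "'v \<Rightarrow> 'v list" where
  "Succ v = (if v \<in> Vb - dS D then map (\<lambda>k. sv (v,k)) [0..<length (dX D v)] else [])"
definition Rg :: "'v \<Rightarrow> nat" where
  "Rg v = (if v \<in> Vb then dR D v + cnt v else if v \<in> Rl then 1 else 0)"
definition Sg :: "'v set" where "Sg = dS D \<union> Sp \<union> Rl"
definition C :: "'v set \<Rightarrow> ('v,'f,'x) drag" where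
  "C V = \<lparr> dV = V, dR = \<lambda>v. if v \<in> V then Rg v else 0, dL = Lab, dX = Succ, dS = V \<inter> Sg \<rparr>"

lemma finV: "finite Vb" and SsubV: "dS D \<subseteq> Vb"
  and R0: "\<And>v. v \<notin> Vb \<Longrightarrow> dR D v = 0"
  and sproutL: "\<And>v. v \<in> dS D \<Longrightarrow> (\<exists>x. dL D v = Vr x) \<and> dX D v = []"
  and intL: "\<And>v. v \<in> Vb - dS D \<Longrightarrow> \<exists>f. dL D v = Fn f \<and> length (dX D v) = ar f"
  and succV: "\<And>v. v \<in> Vb \<Longrightarrow> set (dX D v) \<subseteq> Vb"
  using dD unfolding is_drag_def by blast+

lemma finE: "finite E" unfolding EE_def using finV by auto

lemma E_iff: "(a,k) \<in> E \<longleftrightarrow> a \<in> Vb \<and> k < length (dX D a)" unfolding EE_def by auto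

lemma E_int: "(a,k) \<in> E \<Longrightarrow> a \<in> Vb - dS D"
  using sproutL E_iff by force

lemma tgt_V: "e \<in> E \<Longrightarrow> tgt e \<in> Vb"
  using succV E_iff unfolding tgt_def by (cases e) (auto simp: subset_iff)

lemma sv_notV: "e \<in> E \<Longrightarrow> sv e \<notin> Vb" and qv_notV: "e \<in> E \<Longrightarrow> qv e \<notin> Vb"
  and sv_ne_qv: "e \<in> E \<Longrightarrow> e' \<in> E \<Longrightarrow> sv e \<noteq> qv e'"
  using vfresh sqv by blast+

lemma sv_eq: "e \<in> E \<Longrightarrow> e' \<in> E \<Longrightarrow> sv e = sv e' \<longleftrightarrow> e = e'"
  using svi by (auto dest: inj_onD)
lemma qv_eq: "e \<in> E \<Longrightarrow> e' \<in> E \<Longrightarrow> qv e = qv e' \<longleftrightarrow> e = e'"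
  using qvi by (auto dest: inj_onD)

lemma Lab_sv: "e \<in> E \<Longrightarrow> Lab (sv e) = Vr (sx e)"
  unfolding Lab_def using sv_notV svi by (simp add: the_inv_into_f_f)
lemma Lab_qv: "e \<in> E \<Longrightarrow> Lab (qv e) = Vr (qx e)"
  unfolding Lab_def using qv_notV qvi sqv by (auto simp add: the_inv_into_f_f)
lemma Lab_V: "v \<in> Vb \<Longrightarrow> Lab v = dL D v" unfolding Lab_def by simp

lemma Succ_set: "set (Succ v) \<subseteq> Sp"
  unfolding Succ_def by (auto simp: E_iff)

lemma Succ_nth: "k < length (Succ a) \<Longrightarrow> a \<in> Vb - dS D \<and> (a,k) \<in> E \<and> Succ a ! k = sv (a,k)"
  unfolding Succ_def by (auto split: if_splits simp: E_iff)

lemma lab_same: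
  assumes "v \<in> Vall" "w \<in> Vall" "Lab v = Vr x" "Lab w = Vr x"
  shows "v = w \<or> (v \<in> dS D \<and> w \<in> dS D)"
proof -
  have intF: "u \<in> Vb - dS D \<Longrightarrow> Lab u \<noteq> Vr y" for u y using intL Lab_V by fastforce
  have dv: "u \<in> Vb \<Longrightarrow> Lab u = Vr y \<Longrightarrow> y \<in> dvars D" for u y using Lab_V unfolding dvars_def by auto
  have c1: "u \<in> Vb \<Longrightarrow> Lab u = Vr y \<Longrightarrow> u \<in> dS D" for u y using intF by blast
  have c2: "u \<in> Vb \<Longrightarrow> Lab u = Vr y \<Longrightarrow> u' \<in> Sp \<union> Rl \<Longrightarrow> Lab u' \<noteq> Vr y" for u u' y
  proof
    assume a: "u \<in> Vb" "Lab u = Vr y" "u' \<in> Sp \<union> Rl" "Lab u' = Vr y"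
    then have "y \<in> dvars D" using dv by blast
    moreover obtain e where e: "e \<in> E" "u' = sv e \<or> u' = qv e" using a(3) by blast
    have "y = sx e \<or> y = qx e" using e(2) a(4) Lab_sv[OF e(1)] Lab_qv[OF e(1)] by auto
    ultimately show False using xfresh e(1) by blast
  qed
  have c3: "u \<in> Sp \<union> Rl \<Longrightarrow> u' \<in> Sp \<union> Rl \<Longrightarrow> Lab u = Lab u' \<Longrightarrow> u = u'" for u u'
  proof -
    assume a: "u \<in> Sp \<union> Rl" "u' \<in> Sp \<union> Rl" "Lab u = Lab u'"
    from a(1) obtain e where e: "e \<in> E" "u = sv e \<or> u = qv e" by blast
    from a(2) obtain e' where e': "e' \<in> E" "u' = sv e' \<or> u' = qv e'" by blast
    have "sx ` E \<inter> qx ` E = {}" by (rule sqx)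
    then have ne: "sx e \<noteq> qx e'" "qx e \<noteq> sx e'" using e(1) e'(1) by blast+
    show "u = u'" using e(2) e'(2)
    proof (elim disjE)
      assume "u = sv e" "u' = sv e'" then have "sx e = sx e'" using a(3) Lab_sv e(1) e'(1) by simp
      thus ?thesis using inj_onD[OF sxi] e(1) e'(1) \<open>u = sv e\<close> \<open>u' = sv e'\<close> by blast
    next
      assume "u = qv e" "u' = qv e'" then have "qx e = qx e'" using a(3) Lab_qv e(1) e'(1) by simp
      thus ?thesis using inj_onD[OF qxi] e(1) e'(1) \<open>u = qv e\<close> \<open>u' = qv e'\<close> by blast
    next
      assume "u = sv e" "u' = qv e'" thus ?thesis using a(3) Lab_sv Lab_qv e(1) e'(1) ne by simp
    next
      assume "u = qv e" "u' = sv e'" thus ?thesis using a(3) Lab_sv Lab_qv e(1) e'(1) ne by simp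
    qed
  qed
  show ?thesis
  proof (cases "v \<in> Vb")
    case True
    then have "v \<in> dS D" using c1 assms(3) by blast
    show ?thesis
    proof (cases "w \<in> Vb")
      case True thus ?thesis using c1 assms(4) \<open>v \<in> dS D\<close> by blast
    next
      case False thus ?thesis using c2[OF \<open>v \<in> Vb\<close> assms(3), of w] assms(2,4) by blast
    qed
  next
    case False
    then have v: "v \<in> Sp \<union> Rl" using assms(1) by blast
    show ?thesis
    proof (cases "w \<in> Vb")
      case True thus ?thesis using c2[OF True assms(4) v] assms(3) by blast
    next
      case False then have w: "w \<in> Sp \<union> Rl" using assms(2) by blast
      show ?thesis using c3[OF v w] assms(3,4) by simp
    qed
  qed
qed


lemma dsum_C: "A \<inter> B = {} \<Longrightarrow> dsum (C A) (C B) = C (A \<union> B)"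
  unfolding dsum_def C_def by (auto intro!: ext)

lemma dvars_C: "dvars (C V) = {x. \<exists>v\<in>V. Lab v = Vr x}"
  unfolding dvars_def C_def by simp

lemma C_simps: "dV (C V) = V" "dS (C V) = V \<inter> Sg" "dL (C V) = Lab" "dX (C V) = Succ"
  "dR (C V) v = (if v \<in> V then Rg v else 0)"
  unfolding C_def by simp_all

lemma Succ_notint: "v \<notin> Vb - dS D \<Longrightarrow> Succ v = []" unfolding Succ_def by auto

lemma is_drag_C:
  assumes "finite V" "V \<subseteq> Vall" "\<forall>v\<in>V. set (Succ v) \<subseteq> V"
  shows "is_drag ar (C V)"
  unfolding is_drag_def
proof (intro conjI ballI allI impI)
  show "finite (dV (C V))" using assms(1) by (simp add: C_simps)
  show "dS (C V) \<subseteq> dV (C V)" by (auto simp: C_simps)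
  fix v
  { assume "v \<notin> dV (C V)" thus "dR (C V) v = 0" by (simp add: C_simps) }
  { assume v: "v \<in> dS (C V)"
    then have vs: "v \<in> V \<inter> Sg" by (simp add: C_simps)
    then have "v \<notin> Vb - dS D" using sv_notV qv_notV unfolding Sg_def by auto
    then show "dX (C V) v = []" by (simp add: C_simps Succ_notint)
    show "\<exists>x. dL (C V) v = Vr x" unfolding C_simps
      using vs sproutL Lab_V Lab_sv Lab_qv unfolding Sg_def by (auto simp: SsubV[THEN subsetD])
  }
  { assume v: "v \<in> dV (C V) - dS (C V)"
    then have "v \<in> Vb - dS D" using assms(2) unfolding Sg_def C_simps by blast
    then obtain f where "dL D v = Fn f" "length (dX D v) = ar f" using intL by blast
    thus "\<exists>f. dL (C V) v = Fn f \<and> length (dX (C V) v) = ar f"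
      unfolding C_simps using \<open>v \<in> Vb - dS D\<close> Lab_V by (auto simp: Succ_def)
  }
  { assume "v \<in> dV (C V)" thus "set (dX (C V) v) \<subseteq> dV (C V)" using assms(3) by (simp add: C_simps) }
qed

definition pw :: "'v set list \<Rightarrow> bool" where
  "pw Vs \<longleftrightarrow> (\<forall>A\<in>set Vs. \<forall>B\<in>set Vs. A \<noteq> B \<longrightarrow> A \<inter> B = {} \<and> dvars (C A) \<inter> dvars (C B) = {})"

lemma eval_sumE:
  "Vs \<noteq> [] \<Longrightarrow> \<forall>V\<in>set Vs. is_drag ar (C V) \<Longrightarrow> distinct Vs \<Longrightarrow> pw Vs
   \<Longrightarrow> eval ar (sumE C Vs) (C (\<Union>(set Vs)))"
proof (induction Vs rule: induct_list012)
  case 1 thus ?case by simp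
next
  case (2 x) thus ?case by (simp add: eval_comp)
next
  case (3 V W Vs)
  have pw: "pw (W # Vs)" using 3(6) unfolding pw_def by simp
  have IH: "eval ar (sumE C (W # Vs)) (C (\<Union>(set (W # Vs))))"
    using 3 pw by simp
  have dis: "V \<inter> \<Union>(set (W # Vs)) = {}" using 3(5,6) unfolding pw_def by fastforce
  have disv: "dvars (C V) \<inter> dvars (C (\<Union>(set (W # Vs)))) = {}"
  proof -
    have "dvars (C V) \<inter> dvars (C B) = {}" if "B \<in> set (W # Vs)" for B
      using 3(5,6) that unfolding pw_def by (metis distinct.simps(2) list.set_intros(1,2))
    thus ?thesis unfolding dvars_C by blast
  qed
  have dd: "disjoint_drags (C V) (C (\<Union>(set (W # Vs))))"
    using dis disv unfolding disjoint_drags_def C_simps by simp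
  have "eval ar (DSum (Comp (C V)) (sumE C (W # Vs))) (dsum (C V) (C (\<Union>(set (W # Vs)))))"
    by (rule eval_sum[OF eval_comp IH dd]) (use 3(4) in simp)
  thus ?case using dsum_C[OF dis] by (simp add: Un_assoc)
qed


definition sig :: "('v \<times> nat) set \<Rightarrow> 'v \<Rightarrow> 'v" where
  "sig F w = (if w \<in> sv ` F then tgt (the_inv_into E sv w) else w)"
definition Rd :: "'v \<Rightarrow> nat" where "Rd v = (if v \<in> Vall then Rg v else 0)"
definition St :: "('v \<times> nat) set \<Rightarrow> ('v,'f,'x) drag" where
  "St F = \<lparr> dV = Vall - sv ` F - qv ` F,
     dR = \<lambda>v. if v \<in> sv ` F \<union> qv ` F then 0 else Rd v - card {e \<in> F. tgt e = v},
     dL = Lab, dX = \<lambda>v. map (sig F) (Succ v), dS = Vall \<inter> Sg - sv ` F - qv ` F \<rparr>"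
definition Wf :: "('v \<times> nat) set \<Rightarrow> ('v \<times> 'v) set" where
  "Wf F = (\<lambda>e. (sv e, qv e)) ` (E - F) \<union> (\<lambda>e. (qv e, tgt e)) ` (E - F)"

lemma St_simps: "dV (St F) = Vall - sv ` F - qv ` F" "dL (St F) = Lab"
  "dX (St F) = (\<lambda>v. map (sig F) (Succ v))" "dS (St F) = Vall \<inter> Sg - sv ` F - qv ` F"
  "dR (St F) = (\<lambda>v. if v \<in> sv ` F \<union> qv ` F then 0 else Rd v - card {e \<in> F. tgt e = v})"
  unfolding St_def by simp_all

lemma sig_sv: assumes "F \<subseteq> E" "e \<in> E" shows "sig F (sv e) = (if e \<in> F then tgt e else sv e)"
proof (cases "e \<in> F")
  case True thus ?thesis unfolding sig_def using svi assms by (simp add: the_inv_into_f_f)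
next
  case False
  have "sv e \<notin> sv ` F"
  proof
    assume "sv e \<in> sv ` F" then obtain f where "f \<in> F" "sv e = sv f" by blast
    thus False using sv_eq[OF assms(2), of f] assms False by blast
  qed
  thus ?thesis unfolding sig_def using False by simp
qed

lemma St_empty: "St {} = C Vall"
  unfolding St_def C_def Rd_def sig_def by (auto intro!: ext)

lemma len_Succ: "a \<in> Vb - dS D \<Longrightarrow> length (Succ a) = length (dX D a)"
  unfolding Succ_def by simp

lemma edges_St: assumes "F \<subseteq> E"
  shows "edges (St F) = {(a,k,b). (a,k) \<in> E \<and> b = sig F (sv (a,k))}"
proof (intro set_eqI iffI)
  fix x assume "x \<in> edges (St F)"
  then obtain a k b where x: "x = (a,k,b)" "k < length (Succ a)" "sig F (Succ a ! k) = b"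
    unfolding edges_def St_simps by auto
  thus "x \<in> {(a,k,b). (a,k) \<in> E \<and> b = sig F (sv (a,k))}" using Succ_nth[OF x(2)] by auto
next
  fix x assume "x \<in> {(a,k,b). (a,k) \<in> E \<and> b = sig F (sv (a,k))}"
  then obtain a k where x: "x = (a,k,sig F (sv (a,k)))" "(a,k) \<in> E" by auto
  have a: "a \<in> Vb - dS D" using E_int x(2) .
  have k: "k < length (Succ a)" using x(2) len_Succ[OF a] E_iff by simp
  have "a \<notin> sv ` F \<union> qv ` F" using a vfresh assms by blast
  thus "x \<in> edges (St F)" unfolding edges_def St_simps using a k x Succ_nth[OF k] by auto
qed

abbreviation "rho1 e \<equiv> (\<lambda>w. if w = sv e then qv e else w)"

lemma edges_Mid: assumes "F \<subseteq> E" "e \<in> E"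
  shows "edges (elem_wire (St F) (sv e) (qv e)) = {(a,k,b). (a,k) \<in> E \<and> b = rho1 e (sig F (sv (a,k)))}"
proof (intro set_eqI iffI)
  fix x assume "x \<in> edges (elem_wire (St F) (sv e) (qv e))"
  then obtain a k b where x: "x = (a,k,b)" "k < length (Succ a)" "rho1 e (sig F (Succ a ! k)) = b"
    unfolding edges_def St_simps elem_wire_def by auto
  thus "x \<in> {(a,k,b). (a,k) \<in> E \<and> b = rho1 e (sig F (sv (a,k)))}" using Succ_nth[OF x(2)] by auto
next
  fix x assume "x \<in> {(a,k,b). (a,k) \<in> E \<and> b = rho1 e (sig F (sv (a,k)))}"
  then obtain a k where x: "x = (a,k,rho1 e (sig F (sv (a,k))))" "(a,k) \<in> E" by auto
  have a: "a \<in> Vb - dS D" using E_int x(2) .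
  have k: "k < length (Succ a)" using x(2) len_Succ[OF a] E_iff by simp
  have "a \<notin> sv ` F \<union> qv ` F \<union> {sv e}" using a vfresh assms by blast
  thus "x \<in> edges (elem_wire (St F) (sv e) (qv e))"
    unfolding edges_def St_simps elem_wire_def using a k x Succ_nth[OF k] by auto
qed

lemma pred_St: assumes "F \<subseteq> E" "e \<in> E - F" shows "pred (sv e) (St F) = 1"
proof -
  have "{x \<in> edges (St F). snd (snd x) = sv e} = {(fst e, snd e, sv e)}"
  proof (intro set_eqI iffI)
    fix x assume "x \<in> {x \<in> edges (St F). snd (snd x) = sv e}"
    then obtain a k where x: "x = (a,k,sv e)" "(a,k) \<in> E" "sig F (sv (a,k)) = sv e"
      unfolding edges_St[OF assms(1)] by auto
    have "(a,k) \<notin> F" using x sig_sv[OF assms(1) x(2)] tgt_V sv_notV assms by (metis DiffD1)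
    then have "sv (a,k) = sv e" using x sig_sv[OF assms(1) x(2)] by simp
    then have "(a,k) = e" using sv_eq x(2) assms(2) by blast
    thus "x \<in> {(fst e, snd e, sv e)}" using x by auto
  next
    fix x assume "x \<in> {(fst e, snd e, sv e)}"
    thus "x \<in> {x \<in> edges (St F). snd (snd x) = sv e}"
      unfolding edges_St[OF assms(1)] using assms sig_sv[OF assms(1), of e] by (cases e) auto
  qed
  thus ?thesis unfolding pred_def by simp
qed

lemma pred_Mid: assumes "F \<subseteq> E" "e \<in> E - F"
  shows "pred (qv e) (elem_wire (St F) (sv e) (qv e)) = 1"
proof -
  have "{x \<in> edges (elem_wire (St F) (sv e) (qv e)). snd (snd x) = qv e} = {(fst e, snd e, qv e)}"
  proof (intro set_eqI iffI)
    fix x assume "x \<in> {x \<in> edges (elem_wire (St F) (sv e) (qv e)). snd (snd x) = qv e}"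
    then obtain a k where x: "x = (a,k,qv e)" "(a,k) \<in> E" "rho1 e (sig F (sv (a,k))) = qv e"
      unfolding edges_Mid[OF assms(1) DiffD1[OF assms(2)]] using assms by auto
    have ne: "sig F (sv (a,k)) \<noteq> qv e"
      using sig_sv[OF assms(1) x(2)] tgt_V[OF x(2)] qv_notV[OF DiffD1[OF assms(2)]]
        sv_ne_qv[OF x(2) DiffD1[OF assms(2)]] by (auto split: if_splits)
    then have "sig F (sv (a,k)) = sv e" using x(3) by (auto split: if_splits)
    have "(a,k) \<notin> F"
    proof
      assume "(a,k) \<in> F" then have "tgt (a,k) = sv e"
        using \<open>sig F (sv (a,k)) = sv e\<close> sig_sv[OF assms(1) x(2)] by simp
      thus False using tgt_V[OF x(2)] sv_notV[OF DiffD1[OF assms(2)]] by simp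
    qed
    then have "sv (a,k) = sv e" using \<open>sig F (sv (a,k)) = sv e\<close> sig_sv[OF assms(1) x(2)] by simp
    then have "(a,k) = e" using sv_eq x(2) assms(2) by blast
    thus "x \<in> {(fst e, snd e, qv e)}" using x by auto
  next
    fix x assume "x \<in> {(fst e, snd e, qv e)}"
    thus "x \<in> {x \<in> edges (elem_wire (St F) (sv e) (qv e)). snd (snd x) = qv e}"
      unfolding edges_Mid[OF assms(1) DiffD1[OF assms(2)]] using assms sig_sv[OF assms(1), of e] by (cases e) auto
  qed
  thus ?thesis unfolding pred_def by simp
qed


lemma card_ins_tgt: assumes "F \<subseteq> E" "e \<in> E - F"
  shows "card {e' \<in> insert e F. tgt e' = v} = (if tgt e = v then Suc (card {e' \<in> F. tgt e' = v}) else card {e' \<in> F. tgt e' = v})"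
proof -
  have fin: "finite {e' \<in> F. tgt e' = v}" using finE assms(1) by (auto intro: finite_subset)
  show ?thesis
  proof (cases "tgt e = v")
    case True
    then have "{e' \<in> insert e F. tgt e' = v} = insert e {e' \<in> F. tgt e' = v}" by auto
    thus ?thesis using True fin assms(2) by simp
  next
    case False
    then have "{e' \<in> insert e F. tgt e' = v} = {e' \<in> F. tgt e' = v}" by auto
    thus ?thesis using False by simp
  qed
qed

lemma two_wires: assumes F: "F \<subseteq> E" and e: "e \<in> E - F"
  shows "elem_wire (elem_wire (St F) (sv e) (qv e)) (qv e) (tgt e) = St (insert e F)"
proof (rule drag.equality)
  have eE: "e \<in> E" using e by blast
  have F': "insert e F \<subseteq> E" using F eE by blast
  have p1: "pred (sv e) (St F) = 1" using pred_St[OF F e] .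
  have p2: "pred (qv e) (elem_wire (St F) (sv e) (qv e)) = 1" using pred_Mid[OF F e] .
  have tV: "tgt e \<in> Vb" using tgt_V[OF eE] .
  have nsv: "sv e \<notin> Vb" "qv e \<notin> Vb" "sv e \<noteq> qv e" using sv_notV qv_notV sv_ne_qv eE by auto
  show "dV (elem_wire (elem_wire (St F) (sv e) (qv e)) (qv e) (tgt e)) = dV (St (insert e F))"
    unfolding elem_wire_def St_simps by auto
  show "dS (elem_wire (elem_wire (St F) (sv e) (qv e)) (qv e) (tgt e)) = dS (St (insert e F))"
    unfolding elem_wire_def St_simps by auto
  show "dL (elem_wire (elem_wire (St F) (sv e) (qv e)) (qv e) (tgt e)) = dL (St (insert e F))"
    unfolding elem_wire_def St_simps by simp
  show "drag.more (elem_wire (elem_wire (St F) (sv e) (qv e)) (qv e) (tgt e)) = drag.more (St (insert e F))"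
    unfolding elem_wire_def St_def by simp
  show "dX (elem_wire (elem_wire (St F) (sv e) (qv e)) (qv e) (tgt e)) = dX (St (insert e F))"
  proof (rule ext)
    fix v
    have "map (\<lambda>w. if w = qv e then tgt e else w) (map (rho1 e) (map (sig F) (Succ v)))
          = map (sig (insert e F)) (Succ v)"
    proof -
      have pt: "(\<lambda>w. if w = qv e then tgt e else w) (rho1 e (sig F w)) = sig (insert e F) w"
        if ws: "w \<in> set (Succ v)" for w
      proof -
        obtain e' where e': "e' \<in> E" "w = sv e'" using Succ_set ws by blast
        show ?thesis
          using sig_sv[OF F e'(1)] sig_sv[OF F' e'(1)] e' eE e tgt_V[OF e'(1)] nsv
            sv_eq[OF e'(1) eE] sv_ne_qv[OF e'(1) eE] by auto
      qed
      show ?thesis unfolding map_map by (rule map_cong[OF refl]) (simp only: comp_apply pt)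
    qed
    thus "dX (elem_wire (elem_wire (St F) (sv e) (qv e)) (qv e) (tgt e)) v = dX (St (insert e F)) v"
      unfolding elem_wire_def St_simps by simp
  qed
  show "dR (elem_wire (elem_wire (St F) (sv e) (qv e)) (qv e) (tgt e)) = dR (St (insert e F))"
  proof (rule ext)
    fix v
    have A: "dR (elem_wire (elem_wire (St F) (sv e) (qv e)) (qv e) (tgt e)) v =
      (if v = qv e then 0 else if v = tgt e then dR (St F) (tgt e) - 1
       else if v = sv e then 0 else dR (St F) v)"
      unfolding elem_wire_def[of "elem_wire (St F) (sv e) (qv e)"] p2
      unfolding elem_wire_def p1 using nsv tV by auto
    have B: "v \<in> sv ` insert e F \<union> qv ` insert e F \<longleftrightarrow> v = sv e \<or> v = qv e \<or> v \<in> sv ` F \<union> qv ` F"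
      by auto
    have tF: "tgt e \<notin> sv ` F \<union> qv ` F" using tV vfresh F by blast
    show "dR (elem_wire (elem_wire (St F) (sv e) (qv e)) (qv e) (tgt e)) v = dR (St (insert e F)) v"
      unfolding A St_simps B card_ins_tgt[OF F e] using tF nsv tV by auto
  qed
qed


lemma Range_Wf: "Range (Wf F) \<subseteq> Rl \<union> Vb"
  unfolding Wf_def using tgt_V by auto

lemma wiring_St: "F \<subseteq> E \<Longrightarrow> wiring (St F) (Wf F) (St E)"
proof (induction "card (E - F)" arbitrary: F)
  case 0
  then have "E - F = {}" using finE by simp
  then have "F = E" using 0 by blast
  moreover have "Wf E = {}" unfolding Wf_def by simp
  ultimately show ?case by (simp add: wiring_empty)
next
  case (Suc n)
  have "E - F \<noteq> {}" using Suc(2) by (metis card.empty nat.distinct(1))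
  then obtain e where e: "e \<in> E - F" by blast
  have eE: "e \<in> E" using e by blast
  have F': "insert e F \<subseteq> E" using Suc eE by blast
  have cn: "n = card (E - insert e F)"
  proof -
    have "E - insert e F = (E - F) - {e}" by blast
    moreover have "finite (E - F)" using finE by blast
    ultimately show ?thesis using card_Diff_singleton[of e "E - F"] e Suc(2) by simp
  qed
  have IH: "wiring (St (insert e F)) (Wf (insert e F)) (St E)" using Suc(1)[OF cn F'] .
  have nsv: "sv e \<notin> Vb" "qv e \<notin> Vb" "sv e \<noteq> qv e" using sv_notV qv_notV sv_ne_qv eE by auto
  have w1: "(sv e, qv e) \<in> Wf F" unfolding Wf_def using e by blast
  have w2: "(qv e, tgt e) \<in> Wf F - {(sv e, qv e)}"
  proof -
    have "(qv e, tgt e) \<in> (\<lambda>e. (qv e, tgt e)) ` (E - F)" using e by blast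
    thus ?thesis unfolding Wf_def using nsv(3) by auto
  qed
  have r1: "\<not> (\<exists>t. (t, sv e) \<in> (Wf F)\<^sup>+)"
  proof
    assume "\<exists>t. (t, sv e) \<in> (Wf F)\<^sup>+"
    then have "sv e \<in> Range (Wf F)" using trancl_range by (metis RangeI)
    thus False using Range_Wf nsv sv_ne_qv eE by blast
  qed
  have r2: "\<not> (\<exists>t. (t, qv e) \<in> (Wf F - {(sv e, qv e)})\<^sup>+)"
  proof
    assume "\<exists>t. (t, qv e) \<in> (Wf F - {(sv e, qv e)})\<^sup>+"
    then have "qv e \<in> Range (Wf F - {(sv e, qv e)})" using trancl_range by (metis RangeI)
    then obtain t where t: "(t, qv e) \<in> Wf F" "(t, qv e) \<noteq> (sv e, qv e)" by blast
    from t(1) show False unfolding Wf_def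
    proof (elim UnE imageE)
      fix e' assume "(t, qv e) = (sv e', qv e')" "e' \<in> E - F"
      thus False using t(2) qv_eq eE by auto
    next
      fix e' assume "(t, qv e) = (qv e', tgt e')" "e' \<in> E - F"
      thus False using tgt_V nsv by auto
    qed
  qed
  have weq: "Wf F - {(sv e, qv e)} - {(qv e, tgt e)} = Wf (insert e F)"
  proof -
    have a: "(sv e', qv e') \<noteq> (qv e, tgt e)" "(qv e', tgt e') \<noteq> (sv e, qv e)" if "e' \<in> E" for e'
      using sv_ne_qv[OF that eE] sv_ne_qv[OF eE that] by auto
    have b: "(sv e', qv e') = (sv e, qv e) \<longleftrightarrow> e' = e" "(qv e', tgt e') = (qv e, tgt e) \<longleftrightarrow> e' = e"
      if "e' \<in> E" for e' using sv_eq qv_eq that eE by auto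
    have EF: "E - F = insert e (E - insert e F)" using e by blast
    have WF: "Wf F = Wf (insert e F) \<union> {(sv e,qv e),(qv e,tgt e)}"
      unfolding Wf_def EF image_insert by blast
    have n1: "(sv e, qv e) \<notin> Wf (insert e F)" and n2: "(qv e, tgt e) \<notin> Wf (insert e F)"
    proof -
      have "x \<notin> Wf (insert e F)" if x: "x = (sv e, qv e) \<or> x = (qv e, tgt e)" for x
      proof
        assume "x \<in> Wf (insert e F)"
        then obtain e' where e': "e' \<in> E" "e' \<noteq> e" "x = (sv e', qv e') \<or> x = (qv e', tgt e')"
          unfolding Wf_def by blast
        show False using a[OF e'(1)] b[OF e'(1)] e'(2) e'(3) x by auto
      qed
      thus "(sv e, qv e) \<notin> Wf (insert e F)" "(qv e, tgt e) \<notin> Wf (insert e F)" by auto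
    qed
    show ?thesis using WF n1 n2 by blast
  qed
  show ?case
    apply (rule wiring_step[OF w1 r1])
    apply (rule wiring_step[OF w2 r2])
    using IH two_wires[OF Suc(3) e] weq by simp
qed

lemma St_E_same: "same_drag (St E) D"
  unfolding same_drag_def St_simps
proof (intro conjI allI ballI)
  show "Vall - Sp - Rl = Vb" using vfresh by blast
  show "Vall \<inter> Sg - Sp - Rl = dS D" using vfresh SsubV unfolding Sg_def by blast
  fix v
  show "(if v \<in> Sp \<union> Rl then 0 else Rd v - card {e \<in> E. tgt e = v}) = dR D v"
  proof -
    have "v \<in> Sp \<union> Rl \<Longrightarrow> v \<notin> Vb" using vfresh by blast
    moreover have "v \<notin> Vb \<Longrightarrow> {e \<in> E. tgt e = v} = {}" using tgt_V by blast
    ultimately show ?thesis unfolding Rd_def Rg_def cnt_def using R0 by auto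
  qed
next
  fix v assume v: "v \<in> Vall - Sp - Rl"
  then have vV: "v \<in> Vb" using vfresh by blast
  show "Lab v = dL D v" using Lab_V[OF vV] .
  show "map (sig E) (Succ v) = dX D v"
  proof (cases "v \<in> dS D")
    case True thus ?thesis using sproutL Succ_notint by simp
  next
    case False
    then have vi: "v \<in> Vb - dS D" using vV by blast
    have "map (sig E) (Succ v) = map (\<lambda>k. dX D v ! k) [0..<length (dX D v)]"
    proof -
      have "map (sig E) (Succ v) = map (\<lambda>k. sig E (sv (v,k))) [0..<length (dX D v)]"
        unfolding Succ_def using vi by simp
      also have "\<dots> = map (\<lambda>k. dX D v ! k) [0..<length (dX D v)]"
      proof (rule map_cong[OF refl])
        fix k assume "k \<in> set [0..<length (dX D v)]"
        then have k: "(v,k) \<in> E" using vV E_iff by simp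
        show "sig E (sv (v,k)) = dX D v ! k" using sig_sv[OF order_refl k] k by (simp add: tgt_def)
      qed
      finally show ?thesis .
    qed
    thus ?thesis by (simp add: map_nth)
  qed
qed


abbreviation "W0 \<equiv> Wf {}"

lemma W0_def': "W0 = (\<lambda>e. (sv e, qv e)) ` E \<union> (\<lambda>e. (qv e, tgt e)) ` E"
  unfolding Wf_def by simp

lemma W0_step: assumes "(a,y) \<in> W0 \<union> (\<lambda>e. (sv e, tgt e)) ` E" "(y,z) \<in> W0"
  shows "(a,z) \<in> W0 \<union> (\<lambda>e. (sv e, tgt e)) ` E"
proof -
  obtain e' where e': "e' \<in> E" "(y = sv e' \<and> z = qv e') \<or> (y = qv e' \<and> z = tgt e')"
    using assms(2) unfolding W0_def' by blast
  obtain e where e: "e \<in> E" "(a = sv e \<and> y = qv e) \<or> (a = qv e \<and> y = tgt e) \<or> (a = sv e \<and> y = tgt e)"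
    using assms(1) unfolding W0_def' by blast
  have n1: "sv e' \<noteq> qv e" using sv_ne_qv[OF e'(1) e(1)] .
  have n2: "sv e' \<noteq> tgt e" "qv e' \<noteq> tgt e" using sv_notV[OF e'(1)] qv_notV[OF e'(1)] tgt_V[OF e(1)] by auto
  have "a = sv e \<and> y = qv e \<and> y = qv e' \<and> z = tgt e'"
    using e(2) e'(2) n1 n2 by (elim disjE) auto
  then have "a = sv e \<and> z = tgt e" using qv_eq[OF e(1) e'(1)] by auto
  thus ?thesis using e(1) by blast
qed

lemma W0_trancl_pair: "(a,c) \<in> W0\<^sup>+ \<Longrightarrow> (a,c) \<in> W0 \<union> (\<lambda>e. (sv e, tgt e)) ` E"
proof (induction rule: trancl_induct)
  case (base y) thus ?case by blast
next
  case (step y z) thus ?case using W0_step by blast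
qed

lemma W0_trancl: "W0\<^sup>+ \<subseteq> W0 \<union> (\<lambda>e. (sv e, tgt e)) ` E"
  using W0_trancl_pair by auto

lemma pred_C_sv: "e \<in> E \<Longrightarrow> pred (sv e) (C Vall) = 1"
  using pred_St[of "{}" e] St_empty by simp

lemma pred_C_qv: "e \<in> E \<Longrightarrow> pred (qv e) (C Vall) = 0"
proof -
  assume e: "e \<in> E"
  have h: "{x \<in> edges (C Vall). snd (snd x) = qv e} = {}"
    unfolding St_empty[symmetric] edges_St[OF empty_subsetI]
    using sig_sv[OF empty_subsetI] sv_ne_qv e by auto
  show ?thesis unfolding pred_def h by simp
qed

lemma dR_CV: "dR (C Vall) r = Rg r \<or> (r \<notin> Vall \<and> dR (C Vall) r = 0)"
  by (simp add: C_simps)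

lemma inj_cond: "(\<Sum>s\<in>{s. (s, r) \<in> W0\<^sup>+}. pred s (C Vall)) \<le> dR (C Vall) r"
proof -
  let ?T = "{s. (s, r) \<in> W0\<^sup>+}"
  let ?A = "{e \<in> E. tgt e = r}" and ?B = "{e \<in> E. qv e = r}"
  have T: "?T \<subseteq> sv ` ?A \<union> qv ` ?A \<union> sv ` ?B" using W0_trancl unfolding W0_def' by blast
  have finT: "finite ?T" by (rule finite_subset[OF T]) (use finE in auto)
  have "(\<Sum>s\<in>?T. pred s (C Vall)) \<le> (\<Sum>s\<in>?T. if s \<in> Sp then 1 else 0)"
  proof (rule sum_mono)
    fix s assume "s \<in> ?T"
    then have "s \<in> Sp \<union> Rl" using T by blast
    thus "pred s (C Vall) \<le> (if s \<in> Sp then 1 else 0)"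
      using pred_C_sv pred_C_qv by auto
  qed
  also have "\<dots> = card {s \<in> ?T. s \<in> Sp}"
    using sum.inter_filter[OF finT, of "\<lambda>_. (1::nat)" "\<lambda>s. s \<in> Sp"] by simp
  also have "\<dots> \<le> card (sv ` ?A \<union> sv ` ?B)"
  proof (rule card_mono)
    show "finite (sv ` ?A \<union> sv ` ?B)" using finE by auto
    show "{s \<in> ?T. s \<in> Sp} \<subseteq> sv ` ?A \<union> sv ` ?B" using T sv_ne_qv by blast
  qed
  also have "\<dots> \<le> card ?A + card ?B"
    by (rule order_trans[OF card_Un_le add_mono[OF card_image_le card_image_le]]) (use finE in auto)
  also have "\<dots> \<le> dR (C Vall) r"
  proof (cases "r \<in> Vb")
    case True
    then have "?B = {}" using qv_notV by blast
    then have "card ?B = 0" by (metis card.empty)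
    thus ?thesis using True by (simp add: C_simps Rg_def cnt_def)
  next
    case False
    then have A: "?A = {}" using tgt_V by blast
    have "card ?B \<le> Suc 0"
      using card_le_Suc0_iff_eq[of ?B] finE qv_eq by auto
    moreover have "?B \<noteq> {} \<Longrightarrow> dR (C Vall) r = 1"
      using False by (auto simp: C_simps Rg_def)
    moreover have cA: "card ?A = 0" using A by (metis card.empty)
    ultimately show ?thesis
    proof (cases "?B = {}")
      case True
      then have "card ?B = 0" by (metis card.empty)
      thus ?thesis using cA by linarith
    next
      case False
      thus ?thesis using cA \<open>card ?B \<le> Suc 0\<close> \<open>?B \<noteq> {} \<Longrightarrow> dR (C Vall) r = 1\<close> by linarith
    qed
  qed
  finally show ?thesis .
qed

lemma W0_irrefl: "(x,x) \<notin> W0\<^sup>+"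
proof
  assume "(x,x) \<in> W0\<^sup>+"
  then have "(x,x) \<in> W0 \<union> (\<lambda>e. (sv e, tgt e)) ` E" using W0_trancl by blast
  then obtain e where "e \<in> E" "(x,x) = (sv e, qv e) \<or> (x,x) = (qv e, tgt e) \<or> (x,x) = (sv e, tgt e)"
    unfolding W0_def' by blast
  thus False using sv_ne_qv[of e e] tgt_V[of e] sv_notV[of e] qv_notV[of e] by auto
qed

lemma wb: "well_behaved (C Vall) W0"
  unfolding well_behaved_def
proof (intro conjI allI impI)
  show "is_wires (C Vall) W0"
    unfolding is_wires_def
  proof (intro ballI, clarify)
    fix s r assume "(s,r) \<in> W0"
    then obtain e where e: "e \<in> E" "(s,r) = (sv e, qv e) \<or> (s,r) = (qv e, tgt e)" unfolding W0_def' by blast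
    show "s \<in> dS (C Vall) \<and> r \<in> dV (C Vall) \<and> r \<noteq> s"
      using e(2) tgt_V[OF e(1)] sv_ne_qv[OF e(1) e(1)] qv_notV[OF e(1)] e(1) unfolding C_simps Sg_def by auto
  qed
  show "finite W0" unfolding W0_def' using finE by simp
  show "\<And>s r r'. (s, r) \<in> W0 \<Longrightarrow> (s, r') \<in> W0 \<Longrightarrow> r = r'"
  proof -
    fix s r r' assume a: "(s, r) \<in> W0" "(s, r') \<in> W0"
    obtain e where e: "e \<in> E" "(s,r) = (sv e, qv e) \<or> (s,r) = (qv e, tgt e)" using a(1) unfolding W0_def' by blast
    obtain e' where e': "e' \<in> E" "(s,r') = (sv e', qv e') \<or> (s,r') = (qv e', tgt e')" using a(2) unfolding W0_def' by blast
    show "r = r'" using e(2) e'(2) sv_eq[OF e(1) e'(1)] qv_eq[OF e(1) e'(1)] sv_ne_qv[OF e(1) e'(1)] sv_ne_qv[OF e'(1) e(1)]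
      by auto
  qed
  show "\<And>r. (\<Sum>s\<in>{s. (s, r) \<in> W0\<^sup>+}. pred s (C Vall)) \<le> dR (C Vall) r" by (rule inj_cond)
  show "acyclic (W0\<^sup>+ \<inter> (dS (C Vall) \<times> dS (C Vall)))"
    unfolding acyclic_def
  proof
    fix x
    show "(x, x) \<notin> (W0\<^sup>+ \<inter> (dS (C Vall) \<times> dS (C Vall)))\<^sup>+"
    proof
      assume "(x, x) \<in> (W0\<^sup>+ \<inter> (dS (C Vall) \<times> dS (C Vall)))\<^sup>+"
      then have "(x,x) \<in> (W0\<^sup>+)\<^sup>+" by (rule trancl_mono) blast
      then show False using W0_irrefl by simp
    qed
  qed
qed


lemma Domain_W0: "Domain W0 = Sp \<union> Rl"
  unfolding W0_def' by auto

lemma coh: "coherent (C Vall) W0 (St E)"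
  unfolding coherent_def
proof (intro conjI allI impI ballI)
  fix x s assume a: "\<exists>s\<in>Domain W0. dL (C Vall) s = Vr x" and s: "s \<in> dS (C Vall)" "dL (C Vall) s = Vr x"
  from a obtain s0 where s0: "s0 \<in> Sp \<union> Rl" "Lab s0 = Vr x" unfolding Domain_W0 C_simps by blast
  have "s0 \<in> Vall" "s \<in> Vall" "Lab s = Vr x" using s0 s unfolding C_simps by auto
  then have "s0 = s \<or> (s0 \<in> dS D \<and> s \<in> dS D)" using lab_same s0 by blast
  moreover have "s0 \<notin> dS D" using s0(1) SsubV vfresh by blast
  ultimately show "s \<in> Domain W0" using s0(1) Domain_W0 by blast
next
  fix s r s' r' assume a: "(s, r) \<in> W0" "(s', r') \<in> W0" "dL (C Vall) s = dL (C Vall) s'"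
  have sd: "s \<in> Sp \<union> Rl" "s' \<in> Sp \<union> Rl" using a(1,2) Domain_W0 by blast+
  then obtain x where x: "Lab s = Vr x"
    using Lab_sv Lab_qv by blast
  have "Lab s' = Vr x" using a(3) x by (simp add: C_simps)
  then have "s = s' \<or> (s \<in> dS D \<and> s' \<in> dS D)" using lab_same[of s s' x] sd x by blast
  moreover have "s \<notin> dS D" using sd SsubV vfresh by blast
  ultimately have "s = s'" by blast
  then have "r = r'" using wb a(1,2) unfolding well_behaved_def by blast
  thus "equimorphic (subdrag (St E) (wire_image W0 r)) (subdrag (St E) (wire_image W0 r'))"
    by (simp add: equimorphic_refl)
qed

definition BI :: "'v \<Rightarrow> 'v set" where
  "BI u = insert u ((\<lambda>k. sv (u,k)) ` {..<length (dX D u)})"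
definition BS :: "'x \<Rightarrow> 'v set" where
  "BS x = {t \<in> dS D. dL D t = Vr x}"
definition Xs :: "'x set" where "Xs = {x. \<exists>t\<in>dS D. dL D t = Vr x}"
definition BP :: "'v set set" where "BP = BI ` (Vb - dS D) \<union> BS ` Xs"
definition BR :: "'v set set" where "BR = (\<lambda>e. {qv e}) ` E"
definition blk :: "'v \<Rightarrow> 'v set" where
  "blk v = (if v \<in> Vb then (if v \<in> dS D then BS (THE x. dL D v = Vr x) else BI v)
            else if v \<in> Sp then BI (fst (the_inv_into E sv v)) else {v})"

lemma blk_sprout: "v \<in> dS D \<Longrightarrow> dL D v = Vr x \<Longrightarrow> blk v = BS x"
  unfolding blk_def using SsubV by auto

lemma BI_sv: "u \<in> Vb - dS D \<Longrightarrow> k < length (dX D u) \<Longrightarrow> (u,k) \<in> E"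
  using E_iff by auto

lemma blk_in: assumes "A \<in> BP \<union> BR" "v \<in> A" shows "blk v = A"
  using assms unfolding BP_def BR_def
proof (elim UnE imageE)
  fix u assume u: "A = BI u" "u \<in> Vb - dS D"
  show ?thesis
  proof (cases "v = u")
    case True thus ?thesis using u unfolding blk_def by simp
  next
    case False
    then obtain k where k: "k < length (dX D u)" "v = sv (u,k)" using assms(2) u(1) unfolding BI_def by auto
    have e: "(u,k) \<in> E" using BI_sv[OF u(2) k(1)] .
    have "v \<notin> Vb" "v \<in> Sp" using sv_notV[OF e] e k(2) by auto
    moreover have "the_inv_into E sv v = (u,k)" using k(2) e svi by (simp add: the_inv_into_f_f)
    ultimately show ?thesis using u unfolding blk_def by simp
  qed
next
  fix x assume x: "A = BS x" "x \<in> Xs"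
  then have "v \<in> dS D" "dL D v = Vr x" using assms(2) unfolding BS_def by auto
  thus ?thesis using blk_sprout x by simp
next
  fix e assume e: "A = {qv e}" "e \<in> E"
  then have v: "v = qv e" using assms(2) by simp
  have "v \<notin> Vb" using qv_notV[OF e(2)] v by auto
  moreover have "v \<notin> Sp" using sqv e(2) v by blast
  ultimately show ?thesis unfolding blk_def using v e by simp
qed

lemma blocks_sub: assumes "A \<in> BP \<union> BR" shows "A \<subseteq> Vall"
  using assms unfolding BP_def BR_def
proof (elim UnE imageE)
  fix u assume u: "A = BI u" "u \<in> Vb - dS D"
  have "(\<lambda>k. sv (u,k)) ` {..<length (dX D u)} \<subseteq> Sp" using BI_sv[OF u(2)] by blast
  thus ?thesis using u unfolding BI_def by blast
next
  fix x assume "A = BS x" thus ?thesis unfolding BS_def using SsubV by blast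
next
  fix e assume "A = {qv e}" "e \<in> E" thus ?thesis by blast
qed

lemma blocks_ne: "A \<in> BP \<union> BR \<Longrightarrow> A \<noteq> {}"
  unfolding BP_def BR_def BI_def BS_def Xs_def by blast

lemma finVall: "finite Vall" using finV finE by blast

lemma blocks_fin: "A \<in> BP \<union> BR \<Longrightarrow> finite A"
  using blocks_sub finVall by (meson finite_subset)

lemma blocks_disj: assumes "A \<in> BP \<union> BR" "B \<in> BP \<union> BR" "A \<noteq> B"
  shows "A \<inter> B = {}" "dvars (C A) \<inter> dvars (C B) = {}"
proof -
  show "A \<inter> B = {}"
  proof (rule ccontr)
    assume "A \<inter> B \<noteq> {}" then obtain v where "v \<in> A" "v \<in> B" by blast
    then have "blk v = A" "blk v = B" using blk_in assms by blast+
    thus False using assms(3) by simp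
  qed
  show "dvars (C A) \<inter> dvars (C B) = {}"
  proof (rule ccontr)
    assume "dvars (C A) \<inter> dvars (C B) \<noteq> {}"
    then obtain x v w where v: "v \<in> A" "Lab v = Vr x" and w: "w \<in> B" "Lab w = Vr x"
      unfolding dvars_C by blast
    have bv: "blk v = A" and bw: "blk w = B" using blk_in assms v w by blast+
    have "v \<in> Vall" "w \<in> Vall" using v(1) w(1) blocks_sub assms(1,2) by blast+
    then have "v = w \<or> (v \<in> dS D \<and> w \<in> dS D)" using lab_same v(2) w(2) by blast
    thus False
    proof
      assume "v = w" thus False using bv bw assms(3) by simp
    next
      assume vw: "v \<in> dS D \<and> w \<in> dS D"
      then have "dL D v = Vr x" "dL D w = Vr x" using v(2) w(2) Lab_V SsubV by auto
      then have "blk v = BS x" "blk w = BS x" using blk_sprout vw by auto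
      thus False using bv bw assms(3) by simp
    qed
  qed
qed

lemma Union_BP: "\<Union>BP = Vb \<union> Sp"
proof
  show "\<Union>BP \<subseteq> Vb \<union> Sp"
  proof
    fix v assume "v \<in> \<Union>BP"
    then obtain A where A: "A \<in> BP" "v \<in> A" by blast
    from A(1) show "v \<in> Vb \<union> Sp" unfolding BP_def
    proof (elim UnE imageE)
      fix u assume u: "A = BI u" "u \<in> Vb - dS D"
      have "(\<lambda>k. sv (u,k)) ` {..<length (dX D u)} \<subseteq> Sp" using BI_sv[OF u(2)] by blast
      thus ?thesis using u A(2) unfolding BI_def by blast
    next
      fix x assume "A = BS x" thus ?thesis using A(2) unfolding BS_def using SsubV by blast
    qed
  qed
  show "Vb \<union> Sp \<subseteq> \<Union>BP"
  proof
    fix v assume "v \<in> Vb \<union> Sp"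
    then consider "v \<in> Vb - dS D" | "v \<in> dS D" | e where "e \<in> E" "v = sv e" by blast
    thus "v \<in> \<Union>BP"
    proof cases
      case 1 thus ?thesis unfolding BP_def BI_def by blast
    next
      case 2
      then obtain x where "dL D v = Vr x" using sproutL by blast
      thus ?thesis using 2 unfolding BP_def BS_def Xs_def by blast
    next
      case 3
      obtain a k where ak: "e = (a,k)" by (cases e)
      then have "a \<in> Vb - dS D" "k < length (dX D a)" using 3 E_int E_iff by auto
      then have "v \<in> BI a" using 3 ak unfolding BI_def by blast
      thus ?thesis using \<open>a \<in> Vb - dS D\<close> unfolding BP_def by blast
    qed
  qed
qed

lemma BP_BR: "BP \<inter> BR = {}"
proof (rule ccontr)
  assume "BP \<inter> BR \<noteq> {}"
  then obtain A where A: "A \<in> BP" "A \<in> BR" by blast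
  then obtain e where e: "e \<in> E" "A = {qv e}" unfolding BR_def by blast
  have "qv e \<in> Vb \<union> Sp" using A(1) e(2) Union_BP by blast
  thus False using qv_notV[OF e(1)] sqv e(1) by blast
qed

lemma Union_BR: "\<Union>BR = Rl" unfolding BR_def by auto

lemma finBP: "finite BP" unfolding BP_def Xs_def
proof -
  have "{x. \<exists>t\<in>dS D. dL D t = Vr x} \<subseteq> (\<lambda>t. case dL D t of Vr x \<Rightarrow> x) ` dS D" by force
  moreover have "finite (dS D)" using SsubV finV finite_subset by blast
  ultimately show "finite (BI ` (Vb - dS D) \<union> BS ` {x. \<exists>t\<in>dS D. dL D t = Vr x})"
    using finV finite_surj by blast
qed

lemma finBR: "finite BR" unfolding BR_def using finE by simp

lemma blocks_drag: assumes "A \<in> BP \<union> BR" shows "is_drag ar (C A)"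
proof (rule is_drag_C)
  show "finite A" "A \<subseteq> Vall" using assms blocks_fin blocks_sub by auto
  show "\<forall>v\<in>A. set (Succ v) \<subseteq> A"
  proof
    fix v assume v: "v \<in> A"
    show "set (Succ v) \<subseteq> A"
    proof (cases "v \<in> Vb - dS D")
      case False thus ?thesis using Succ_notint by simp
    next
      case True
      then have "blk v = BI v" unfolding blk_def by simp
      then have "A = BI v" using blk_in assms v by simp
      thus ?thesis unfolding BI_def Succ_def using True by auto
    qed
  qed
qed

lemma blocks_atomic: assumes "A \<in> BP \<union> BR" shows "atomic_drag ar (C A)"
  using assms unfolding BP_def BR_def
proof (elim UnE imageE)
  fix u assume u: "A = BI u" "u \<in> Vb - dS D"
  have ust: "Succ u = map (\<lambda>k. sv (u,k)) [0..<length (dX D u)]" using u(2) unfolding Succ_def by simp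
  have uSg: "u \<notin> Sg" using u(2) vfresh unfolding Sg_def by blast
  have svSg: "(\<lambda>k. sv (u,k)) ` {..<length (dX D u)} \<subseteq> Sg" using BI_sv[OF u(2)] unfolding Sg_def by blast
  have inj: "inj_on (\<lambda>k. sv (u,k)) {..<length (dX D u)}"
    using BI_sv[OF u(2)] inj_onD[OF svi] by (auto intro!: inj_onI)
  have "atomic_vertex ar (C A)"
    unfolding atomic_vertex_def
  proof (intro conjI exI)
    show "is_drag ar (C A)" using blocks_drag assms by blast
    show "dV (C A) - dS (C A) = {u}" unfolding C_simps u(1) BI_def using uSg svSg by auto
    show "dS (C A) = set (dX (C A) u)" unfolding C_simps u(1) BI_def ust using uSg svSg by auto
    show "distinct (dX (C A) u)" unfolding C_simps ust
      using inj by (simp add: distinct_map lessThan_atLeast0)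
    show "inj_on (dL (C A)) (set (dX (C A) u))" unfolding C_simps ust
    proof (rule inj_onI)
      fix a b assume ab: "a \<in> set (map (\<lambda>k. sv (u, k)) [0..<length (dX D u)])"
        "b \<in> set (map (\<lambda>k. sv (u, k)) [0..<length (dX D u)])" "Lab a = Lab b"
      then obtain k l where kl: "k < length (dX D u)" "l < length (dX D u)" "a = sv (u,k)" "b = sv (u,l)" by auto
      have "sx (u,k) = sx (u,l)" using ab(3) kl Lab_sv BI_sv[OF u(2)] by simp
      then have "(u,k) = (u,l)" using inj_onD[OF sxi] BI_sv[OF u(2)] kl by blast
      thus "a = b" using kl by simp
    qed
  qed
  thus ?thesis unfolding atomic_drag_def by blast
next
  fix x assume x: "A = BS x" "x \<in> Xs"
  have "atomic_sprouts ar (C A)"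
    unfolding atomic_sprouts_def
  proof (intro conjI exI ballI)
    show "is_drag ar (C A)" using blocks_drag assms by blast
    show "dS (C A) = dV (C A)" unfolding C_simps x(1) BS_def Sg_def by auto
    show "dV (C A) \<noteq> {}" unfolding C_simps x(1) BS_def using x(2) Xs_def by auto
    fix s assume "s \<in> dS (C A)"
    then show "dL (C A) s = Vr x" unfolding C_simps x(1) BS_def using Lab_V SsubV by auto
  qed
  thus ?thesis unfolding atomic_drag_def by blast
next
  fix e assume e: "A = {qv e}" "e \<in> E"
  have "atomic_sprouts ar (C A)"
    unfolding atomic_sprouts_def
  proof (intro conjI exI ballI)
    show "is_drag ar (C A)" using blocks_drag assms by blast
    show "dS (C A) = dV (C A)" unfolding C_simps e(1) Sg_def using e(2) by auto
    show "dV (C A) \<noteq> {}" unfolding C_simps e(1) by simp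
    fix s assume "s \<in> dS (C A)"
    then show "dL (C A) s = Vr (qx e)" unfolding C_simps e(1) using Lab_qv e(2) by auto
  qed
  thus ?thesis unfolding atomic_drag_def by blast
qed


lemma list_disj: assumes "distinct L" "set L \<subseteq> BP \<union> BR"
  shows "\<forall>i<length (map C L). \<forall>j<length (map C L). i \<noteq> j \<longrightarrow> disjoint_drags (map C L ! i) (map C L ! j)"
proof (intro allI impI)
  fix i j assume ij: "i < length (map C L)" "j < length (map C L)" "i \<noteq> j"
  then have ne: "L ! i \<noteq> L ! j" using assms(1) nth_eq_iff_index_eq by auto
  have inb: "L ! i \<in> BP \<union> BR" "L ! j \<in> BP \<union> BR" using ij assms(2) nth_mem by auto
  show "disjoint_drags (map C L ! i) (map C L ! j)"
    using blocks_disj[OF inb ne] ij unfolding disjoint_drags_def by (simp add: C_simps)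
qed

lemma list_pw: "set L \<subseteq> BP \<union> BR \<Longrightarrow> pw L"
  unfolding pw_def using blocks_disj by blast

lemma list_eval: assumes "L \<noteq> []" "distinct L" "set L \<subseteq> BP \<union> BR"
  shows "eval ar (sumE C L) (C (\<Union>(set L)))"
  using eval_sumE[OF assms(1) _ assms(2) list_pw[OF assms(3)]] blocks_drag assms(3) by blast

lemma main_expl:
  assumes "dV D \<noteq> {}"
  shows "\<exists>Ex D'. drag_expression Ex \<and> (\<forall>X\<in>set (components Ex). atomic_drag ar X) \<and>
                eval ar Ex D' \<and> same_drag D' D"
proof -
  obtain LP where LP: "set LP = BP" "distinct LP" using finite_distinct_list[OF finBP] by blast
  obtain LQ where LQ: "set LQ = BR" "distinct LQ" using finite_distinct_list[OF finBR] by blast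
  have LPne: "LP \<noteq> []" using LP(1) Union_BP assms by auto
  have LPs: "set LP \<subseteq> BP \<union> BR" using LP by simp
  have LQs: "set LQ \<subseteq> BP \<union> BR" using LQ by simp
  have evP: "eval ar (sumE C LP) (C (Vb \<union> Sp))" using list_eval[OF LPne LP(2) LPs] LP(1) Union_BP by simp
  show ?thesis
  proof (cases "E = {}")
    case True
    have "C (Vb \<union> Sp) = St E" using True St_empty by simp
    then have sd: "same_drag (C (Vb \<union> Sp)) D" using St_E_same by simp
    show ?thesis
    proof (intro exI conjI)
      show "eval ar (sumE C LP) (C (Vb \<union> Sp))" by (rule evP)
      show "same_drag (C (Vb \<union> Sp)) D" by (rule sd)
      show "drag_expression (sumE C LP)"
        unfolding drag_expression_def components_sumE[OF LPne] Let_def using list_disj[OF LP(2) LPs] .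
      show "\<forall>X\<in>set (components (sumE C LP)). atomic_drag ar X"
        unfolding components_sumE[OF LPne] using blocks_atomic LPs by auto
    qed
  next
    case False
    have LQne: "LQ \<noteq> []" using LQ(1) False unfolding BR_def by auto
    have evQ: "eval ar (sumE C LQ) (C Rl)" using list_eval[OF LQne LQ(2) LQs] LQ(1) Union_BR by simp
    let ?xi = "(\<lambda>e. (sv e, qv e)) ` E" and ?xi' = "(\<lambda>e. (qv e, tgt e)) ` E"
    have dis: "(Vb \<union> Sp) \<inter> Rl = {}" using vfresh sqv by blast
    have ds: "dsum (C (Vb \<union> Sp)) (C Rl) = C Vall" using dsum_C[OF dis] by simp
    have xiu: "?xi \<union> ?xi' = W0" using W0_def' by simp
    have wir: "wiring (C Vall) W0 (St E)" using wiring_St[of "{}"] St_empty by simp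
    have dd: "disjoint_drags (C (Vb \<union> Sp)) (C Rl)"
      unfolding disjoint_drags_def C_simps
    proof (intro conjI)
      show "(Vb \<union> Sp) \<inter> Rl = {}" by (rule dis)
      show "dvars (C (Vb \<union> Sp)) \<inter> dvars (C Rl) = {}"
      proof (rule ccontr)
        assume "dvars (C (Vb \<union> Sp)) \<inter> dvars (C Rl) \<noteq> {}"
        then obtain x v w where v: "v \<in> Vb \<union> Sp" "Lab v = Vr x" and w: "w \<in> Rl" "Lab w = Vr x"
          unfolding dvars_C by blast
        then have "v = w \<or> (v \<in> dS D \<and> w \<in> dS D)" using lab_same[of v w x] by blast
        thus False using v(1) w(1) dis vfresh SsubV by blast
      qed
    qed
    have sb: "switchboard (C (Vb \<union> Sp)) (C Rl) ?xi ?xi'"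
      unfolding switchboard_def ds xiu
    proof (intro conjI)
      show "\<forall>(s, r)\<in>?xi. s \<in> dS (C (Vb \<union> Sp)) \<and> r \<in> dV (C Rl) \<and> 0 < dR (C Rl) r"
        unfolding C_simps Sg_def Rg_def using qv_notV by auto
      show "\<forall>s r r'. (s, r) \<in> ?xi \<longrightarrow> (s, r') \<in> ?xi \<longrightarrow> r = r'"
        using sv_eq by auto
      show "\<forall>(s, r)\<in>?xi'. s \<in> dS (C Rl) \<and> r \<in> dV (C (Vb \<union> Sp)) \<and> 0 < dR (C (Vb \<union> Sp)) r"
      proof (intro ballI, clarify)
        fix e assume e: "e \<in> E"
        have "finite {e' \<in> E. tgt e' = tgt e}" using finE by simp
        moreover have "e \<in> {e' \<in> E. tgt e' = tgt e}" using e by simp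
        ultimately have "cnt (tgt e) > 0" unfolding cnt_def by (metis card_gt_0_iff empty_iff)
        thus "qv e \<in> dS (C Rl) \<and> tgt e \<in> dV (C (Vb \<union> Sp)) \<and> 0 < dR (C (Vb \<union> Sp)) (tgt e)"
          using tgt_V[OF e] e unfolding C_simps Sg_def Rg_def by auto
      qed
      show "\<forall>s r r'. (s, r) \<in> ?xi' \<longrightarrow> (s, r') \<in> ?xi' \<longrightarrow> r = r'"
        using qv_eq by auto
      show "well_behaved (C Vall) W0" by (rule wb)
      show "\<exists>DW. wiring (C Vall) W0 DW \<and> coherent (C Vall) W0 DW" using wir coh by blast
    qed
    have ev: "eval ar (DProd (sumE C LP) ?xi ?xi' (sumE C LQ)) (St E)"
      by (rule eval_prod[OF evP evQ dd sb]) (simp add: ds xiu wir)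
    have comps: "components (DProd (sumE C LP) ?xi ?xi' (sumE C LQ)) = map C (LP @ LQ)"
      unfolding components.simps components_sumE[OF LPne] components_sumE[OF LQne] map_append ..
    have dist: "distinct (LP @ LQ)" using LP LQ BP_BR by auto
    have sub: "set (LP @ LQ) \<subseteq> BP \<union> BR" using LP LQ by auto
    show ?thesis
    proof (intro exI conjI)
      show "eval ar (DProd (sumE C LP) ?xi ?xi' (sumE C LQ)) (St E)" by (rule ev)
      show "same_drag (St E) D" by (rule St_E_same)
      show "drag_expression (DProd (sumE C LP) ?xi ?xi' (sumE C LQ))"
        unfolding drag_expression_def comps Let_def using list_disj[OF dist sub] .
      show "\<forall>X\<in>set (components (DProd (sumE C LP) ?xi ?xi' (sumE C LQ))). atomic_drag ar X"
        unfolding comps using blocks_atomic sub by auto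
    qed
  qed
qed

end

lemma fin_dvars: "is_drag ar D \<Longrightarrow> finite (dvars D)"
proof -
  assume d: "is_drag ar D"
  have "dvars D \<subseteq> (\<lambda>v. case dL D v of Vr x \<Rightarrow> x | Fn _ \<Rightarrow> undefined) ` dV D"
    unfolding dvars_def by force
  moreover have "finite (dV D)" using d unfolding is_drag_def by blast
  ultimately show ?thesis using finite_surj by blast
qed

lemma fin_EE: "is_drag ar D \<Longrightarrow> finite (EE D)"
  unfolding EE_def is_drag_def by auto

lemma split_inj:
  assumes "inj_on g (A \<times> (UNIV::bool set))" "g ` (A \<times> UNIV) \<inter> B = {}"
  shows "inj_on (\<lambda>e. g (e, True)) A" "inj_on (\<lambda>e. g (e, False)) A"
    "(\<lambda>e. g (e, True)) ` A \<inter> (\<lambda>e. g (e, False)) ` A = {}"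
    "((\<lambda>e. g (e, True)) ` A \<union> (\<lambda>e. g (e, False)) ` A) \<inter> B = {}"
proof -
  show "inj_on (\<lambda>e. g (e, True)) A" using inj_onD[OF assms(1)] by (auto intro!: inj_onI)
  show "inj_on (\<lambda>e. g (e, False)) A" using inj_onD[OF assms(1)] by (auto intro!: inj_onI)
  show "(\<lambda>e. g (e, True)) ` A \<inter> (\<lambda>e. g (e, False)) ` A = {}"
  proof (rule ccontr)
    assume "(\<lambda>e. g (e, True)) ` A \<inter> (\<lambda>e. g (e, False)) ` A \<noteq> {}"
    then obtain e e' where "e \<in> A" "e' \<in> A" "g (e, True) = g (e', False)" by blast
    then have "(e, True) = (e', False)" using inj_onD[OF assms(1)] by blast
    thus False by simp
  qed
  show "((\<lambda>e. g (e, True)) ` A \<union> (\<lambda>e. g (e, False)) ` A) \<inter> B = {}" using assms(2) by blast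
qed

theorem mainTheorem10:
  fixes ar :: "'f \<Rightarrow> nat" and D :: "('v, 'f, 'x) drag"
  assumes "infinite (UNIV :: 'v set)" and "infinite (UNIV :: 'x set)"
    and "is_drag ar D" and "dV D \<noteq> {}"
  shows "\<exists>E D'. drag_expression E \<and> (\<forall>C\<in>set (components E). atomic_drag ar C) \<and>
                eval ar E D' \<and> same_drag D' D"
proof -
  have fE: "finite (EE D \<times> (UNIV::bool set))" using fin_EE[OF assms(3)] by simp
  have fV: "finite (dV D)" using assms(3) unfolding is_drag_def by blast
  obtain g :: "('v \<times> nat) \<times> bool \<Rightarrow> 'v" where g: "inj_on g (EE D \<times> UNIV)" "g ` (EE D \<times> UNIV) \<inter> dV D = {}"
    using fresh_inj[OF fE fV assms(1)] by blast
  obtain h :: "('v \<times> nat) \<times> bool \<Rightarrow> 'x" where h: "inj_on h (EE D \<times> UNIV)" "h ` (EE D \<times> UNIV) \<inter> dvars D = {}"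
    using fresh_inj[OF fE fin_dvars[OF assms(3)] assms(2)] by blast
  interpret expl ar D "\<lambda>e. g (e, True)" "\<lambda>e. g (e, False)" "\<lambda>e. h (e, True)" "\<lambda>e. h (e, False)"
    using split_inj[OF g] split_inj[OF h] assms(3) by unfold_locales auto
  show ?thesis using main_expl[OF assms(4)] by blast
qed

end
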